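(* Let $G$ be a simple graph. (1) If $\mathcal{B}$ is a strongly disjoint set of bouquets of $G$ of type $(i,j)$, then $\mathcal{E}(\mathcal{B})$ is a self disjoint set in $G$ of type $(i,i+j)$. Conversely, if $\mathcal{S}$ is a self disjoint set in $G$ of type $(i,i+j)$, then $\mathcal{S}=\mathcal{E}(\mathcal{B})$ for some strongly disjoint set of bouquets $\mathcal{B}$ of $G$ of type $(i,j)$. (2) Every self semi-disjoint set in $G$ is a self disjoint set. (3) $d_{1,G}=d_{2,G}=d_G$ and $d'_{1,G}=d'_{2,G}=d'_G$.
   Context: A simple graph $G$ is a simple hypergraph all of whose edges have two elements. A bouquet of $G$ is a subgraph with vertex set $\{x,y_1,\dots,y_t\}$, $t\ge1$, and edges $\{x,y_\ell\}$ ($\ell=1,\dots,t$) of $G$; $x$ is the root, the $y_\ell$ are the flowers and the edges $\{x,y_\ell\}$ the stems. A set $\mathcal{B}=\{B_1,\dots,B_j\}$ of bouquets of $G$ is strongly disjoint if the $B_k$ are pairwise vertex-disjoint and one can choose a stem from each $B_k$ so that these stems form an induced matching of $G$; it has type $(i,j)$ if the total number of flowers is $i$ (and $j$ is the number of bouquets). $\mathcal{E}(\mathcal{B})$ denotes the set of all edges of the bouquets in $\mathcal{B}$. $d_G$ (resp. $d'_G$) is the maximum $i$ (resp. maximum $j$) over strongly disjoint sets of bouquets of $G$ of type $(i,j)$. For a family $\mathcal{S}=\{S_1,\dots,S_i\}$ of distinct edges, its type is $(i,j)$ with $j=|\bigcup_\ell S_\ell|$. $\mathcal{S}$ is a semi-induced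 matching if no edge outside $\mathcal{S}$ is contained in $\bigcup_\ell S_\ell$, an induced matching if moreover its edges are pairwise disjoint. $\mathcal{S}$ is a self disjoint set (resp. self semi-disjoint set) if (i) for all $k$, $S_k\nsubseteq\bigcup_{\ell\neq k}S_\ell$, and (ii) there is an induced matching (resp. semi-induced matching) $\mathcal{S}_0\subseteq\mathcal{S}$ such that for each $S_\ell\in\mathcal{S}\setminus\mathcal{S}_0$ there is $S'\in\mathcal{S}_0$ with $|S_\ell\setminus S'|=1$. $d_{1,G}$ (resp. $d_{2,G}$) is the maximum size of a self disjoint (resp. self semi-disjoint) set, and $d'_{1,G}$ (resp. $d'_{2,G}$) is the maximum of $j-i$ over self disjoint (resp. self semi-disjoint) sets of type $(i,j)$. *)

theory Defs
  imports Main
begin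

definition simple_graph :: "'a set \<Rightarrow> 'a set set \<Rightarrow> bool" where
  "simple_graph V E \<longleftrightarrow> finite V \<and> (\<forall>e\<in>E. e \<subseteq> V \<and> card e = 2)"

definition semi_induced_matching :: "'a set set \<Rightarrow> 'a set set \<Rightarrow> bool" where
  "semi_induced_matching E S \<longleftrightarrow> S \<subseteq> E \<and> (\<forall>e\<in>E. e \<subseteq> \<Union>S \<longrightarrow> e \<in> S)"

definition induced_matching :: "'a set set \<Rightarrow> 'a set set \<Rightarrow> bool" where
  "induced_matching E S \<longleftrightarrow> semi_induced_matching E S \<and>
     (\<forall>e\<in>S. \<forall>f\<in>S. e \<noteq> f \<longrightarrow> e \<inter> f = {})"

text \<open>A bouquet is represented by its set of stems (a nonempty set of edges sharing a
  common vertex, the root); its vertex set is the union of the stems, its flowers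
  number is the number of stems.\<close>
definition bouquet :: "'a set set \<Rightarrow> 'a set set \<Rightarrow> bool" where
  "bouquet E B \<longleftrightarrow> B \<noteq> {} \<and> B \<subseteq> E \<and> (\<exists>x. \<forall>e\<in>B. x \<in> e)"

definition strongly_disjoint :: "'a set set \<Rightarrow> 'a set set set \<Rightarrow> bool" where
  "strongly_disjoint E \<B> \<longleftrightarrow>
     (\<forall>B\<in>\<B>. bouquet E B) \<and>
     (\<forall>B\<in>\<B>. \<forall>B'\<in>\<B>. B \<noteq> B' \<longrightarrow> \<Union>B \<inter> \<Union>B' = {}) \<and>
     (\<exists>f. (\<forall>B\<in>\<B>. f B \<in> B) \<and> induced_matching E (f ` \<B>))"

definition bouquets_type :: "'a set set set \<Rightarrow> nat \<times> nat" where
  "bouquets_type \<B> = ((\<Sum>B\<in>\<B>. card B), card \<B>)"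

definition bouquet_edges :: "'a set set set \<Rightarrow> 'a set set" where
  "bouquet_edges \<B> = \<Union>\<B>"

definition family_type :: "'a set set \<Rightarrow> nat \<times> nat" where
  "family_type S = (card S, card (\<Union>S))"

definition self_disjoint :: "'a set set \<Rightarrow> 'a set set \<Rightarrow> bool" where
  "self_disjoint E S \<longleftrightarrow> S \<subseteq> E \<and>
     (\<forall>e\<in>S. \<not> e \<subseteq> \<Union>(S - {e})) \<and>
     (\<exists>S0 \<subseteq> S. induced_matching E S0 \<and>
        (\<forall>e\<in>S - S0. \<exists>e'\<in>S0. card (e - e') = 1))"

definition self_semi_disjoint :: "'a set set \<Rightarrow> 'a set set \<Rightarrow> bool" where
  "self_semi_disjoint E S \<longleftrightarrow> S \<subseteq> E \<and>
     (\<forall>e\<in>S. \<not> e \<subseteq> \<Union>(S - {e})) \<and>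
     (\<exists>S0 \<subseteq> S. semi_induced_matching E S0 \<and>
        (\<forall>e\<in>S - S0. \<exists>e'\<in>S0. card (e - e') = 1))"

definition dG :: "'a set set \<Rightarrow> nat" where
  "dG E = Max {fst (bouquets_type \<B>) | \<B>. strongly_disjoint E \<B>}"

definition dG' :: "'a set set \<Rightarrow> nat" where
  "dG' E = Max {snd (bouquets_type \<B>) | \<B>. strongly_disjoint E \<B>}"

definition d1G :: "'a set set \<Rightarrow> nat" where
  "d1G E = Max {card S | S. self_disjoint E S}"

definition d2G :: "'a set set \<Rightarrow> nat" where
  "d2G E = Max {card S | S. self_semi_disjoint E S}"

definition d1G' :: "'a set set \<Rightarrow> int" where
  "d1G' E = Max {int (snd (family_type S)) - int (fst (family_type S)) | S. self_disjoint E S}"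

definition d2G' :: "'a set set \<Rightarrow> int" where
  "d2G' E = Max {int (snd (family_type S)) - int (fst (family_type S)) | S. self_semi_disjoint E S}"

end

theory Submission
  imports Defs
begin

lemma Lmem: "card g = 2 \<Longrightarrow> x \<in> g \<Longrightarrow> y \<in> g \<Longrightarrow> x \<noteq> y \<Longrightarrow> g = {x,y}"
  unfolding card_2_iff by auto

lemma Ldiff: "card e = 2 \<Longrightarrow> card g = 2 \<Longrightarrow> e \<noteq> g \<Longrightarrow> e \<inter> g \<noteq> {} \<Longrightarrow> card (e - g) = 1"
proof -
  assume a: "card e = 2" "card g = 2" "e \<noteq> g" "e \<inter> g \<noteq> {}"
  then obtain x where x: "x \<in> e" "x \<in> g" by blast
  obtain y where y: "e = {x,y}" "x \<noteq> y" using a(1) x(1) unfolding card_2_iff by auto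
  have "y \<notin> g" using Lmem[OF a(2) x(2)] y a(3) by auto
  then have "e - g = {y}" using y x by auto
  then show ?thesis by simp
qed

lemma Ldiff2: "card e = 2 \<Longrightarrow> card (e - g) = 1 \<Longrightarrow> e \<inter> g \<noteq> {}"
proof
  assume a: "card e = 2" "card (e - g) = 1" "e \<inter> g = {}"
  then have "e - g = e" by blast
  then show False using a by simp
qed

lemma graph_basic:
  assumes "simple_graph V E"
  shows "finite E" "\<And>e. e \<in> E \<Longrightarrow> card e = 2" "\<And>e. e \<in> E \<Longrightarrow> finite e"
proof -
  have "E \<subseteq> Pow V" "finite V" using assms unfolding simple_graph_def by auto
  then show "finite E" by (meson finite_Pow_iff finite_subset)
  show "\<And>e. e \<in> E \<Longrightarrow> card e = 2" using assms unfolding simple_graph_def by auto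
  then show "\<And>e. e \<in> E \<Longrightarrow> finite e" by (metis card.infinite zero_neq_numeral)
qed

lemma sd_props:
  assumes G: "simple_graph V E" and sd: "strongly_disjoint E \<B>"
  shows "self_disjoint E (\<Union>\<B>) \<and> card (\<Union>\<B>) = (\<Sum>B\<in>\<B>. card B)
         \<and> card (\<Union>(\<Union>\<B>)) = (\<Sum>B\<in>\<B>. card B) + card \<B>"
proof -
  note gb = graph_basic[OF G]
  have bq: "\<And>B. B\<in>\<B> \<Longrightarrow> bouquet E B"
    and disj: "\<And>B B'. B\<in>\<B> \<Longrightarrow> B'\<in>\<B> \<Longrightarrow> B\<noteq>B' \<Longrightarrow> \<Union>B \<inter> \<Union>B' = {}"
    using sd unfolding strongly_disjoint_def by auto
  have "\<exists>f. (\<forall>B\<in>\<B>. f B \<in> B) \<and> induced_matching E (f ` \<B>)"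
    using sd unfolding strongly_disjoint_def by blast
  then obtain f where f: "\<And>B. B\<in>\<B> \<Longrightarrow> f B \<in> B" "induced_matching E (f ` \<B>)"
    by blast
  have BE: "\<And>B. B\<in>\<B> \<Longrightarrow> B \<subseteq> E" and Bne: "\<And>B. B\<in>\<B> \<Longrightarrow> B \<noteq> {}"
    using bq unfolding bouquet_def by auto
  have finBB: "finite \<B>" using BE gb(1)
    by (metis Pow_iff finite_Pow_iff finite_subset subsetI)
  have finB: "\<And>B. B\<in>\<B> \<Longrightarrow> finite B" using BE gb(1) finite_subset by blast
  have "\<forall>B\<in>\<B>. \<exists>x. \<forall>e\<in>B. x\<in>e" using bq unfolding bouquet_def by auto
  then obtain r where r: "\<And>B e. B\<in>\<B> \<Longrightarrow> e\<in>B \<Longrightarrow> r B \<in> e" by metis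
  have edisj: "\<And>B B'. B\<in>\<B> \<Longrightarrow> B'\<in>\<B> \<Longrightarrow> B\<noteq>B' \<Longrightarrow> B \<inter> B' = {}"
  proof (rule ccontr)
    fix B B' assume h: "B\<in>\<B>" "B'\<in>\<B>" "B\<noteq>B'" "B \<inter> B' \<noteq> {}"
    then obtain e where e: "e \<in> B" "e \<in> B'" by blast
    then have "r B \<in> \<Union>B \<inter> \<Union>B'" using r h by auto
    then show False using disj h by blast
  qed
  have card1: "card (\<Union>\<B>) = (\<Sum>B\<in>\<B>. card B)"
    by (rule card_Union_disjoint) (use edisj finB in \<open>auto simp: pairwise_def disjnt_def\<close>)
  have cardB: "card (\<Union>B) = card B + 1" if B: "B\<in>\<B>" for B
  proof -
    let ?x = "r B"
    have c2: "\<And>e. e \<in> B \<Longrightarrow> card e = 2" using gb(2) BE[OF B] by blast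
    have fe: "\<And>e. e \<in> B \<Longrightarrow> finite e" using gb(3) BE[OF B] by blast
    have rB: "\<And>e. e \<in> B \<Longrightarrow> r B \<in> e" using r[OF B] .
    have u: "\<Union>B = insert ?x (\<Union>e\<in>B. e - {?x})" using rB Bne[OF B] by blast
    have nx: "?x \<notin> (\<Union>e\<in>B. e - {?x})" by blast
    have "card (\<Union>e\<in>B. e - {?x}) = (\<Sum>e\<in>B. card (e - {?x}))"
    proof (rule card_UN_disjoint)
      show "finite B" using finB B .
      show "\<forall>i\<in>B. finite (i - {r B})" using fe by auto
      show "\<forall>i\<in>B. \<forall>j\<in>B. i \<noteq> j \<longrightarrow> (i - {r B}) \<inter> (j - {r B}) = {}"
      proof (intro ballI impI)
        fix i j assume ij: "i\<in>B" "j\<in>B" "i\<noteq>j"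
        show "(i - {r B}) \<inter> (j - {r B}) = {}"
        proof (rule ccontr)
          assume "(i - {r B}) \<inter> (j - {r B}) \<noteq> {}"
          then obtain y where y: "y \<in> i" "y \<in> j" "y \<noteq> r B" by blast
          have "i = {r B, y}" using Lmem[OF c2[OF ij(1)] r[OF B ij(1)] y(1)] y by auto
          moreover have "j = {r B, y}" using Lmem[OF c2[OF ij(2)] r[OF B ij(2)] y(2)] y by auto
          ultimately show False using ij by simp
        qed
      qed
    qed
    also have "\<dots> = (\<Sum>e\<in>B. 1)"
    proof (rule sum.cong[OF refl])
      fix e assume "e \<in> B"
      then show "card (e - {r B}) = 1" using c2 fe rB by (simp add: card_Diff_singleton)
    qed
    finally have cc: "card (\<Union>e\<in>B. e - {?x}) = card B" by simp
    have fin: "finite (\<Union>e\<in>B. e - {?x})" using finB[OF B] fe by blast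
    have "card (insert ?x (\<Union>e\<in>B. e - {?x})) = card B + 1"
      unfolding card_insert_disjoint[OF fin nx] cc by simp
    then show ?thesis by (subst u)
  qed
  have "\<Union>(\<Union>\<B>) = \<Union>(Union ` \<B>)" by auto
  then have "card (\<Union>(\<Union>\<B>)) = (\<Sum>B\<in>\<B>. card (\<Union>B))"
    using card_UN_disjoint[of \<B> Union] finBB finB BE gb disj
    by (metis (no_types, lifting) finite_Union subset_eq)
  also have "\<dots> = (\<Sum>B\<in>\<B>. card B + 1)"
    by (rule sum.cong[OF refl], erule cardB)
  also have "\<dots> = (\<Sum>B\<in>\<B>. card B) + card \<B>"
    by (subst sum.distrib) simp
  finally have card2: "card (\<Union>(\<Union>\<B>)) = (\<Sum>B\<in>\<B>. card B) + card \<B>" .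
  have SE: "\<Union>\<B> \<subseteq> E" using BE by auto
  have priv: "\<forall>e\<in>\<Union>\<B>. \<not> e \<subseteq> \<Union>(\<Union>\<B> - {e})"
  proof
    fix e assume "e \<in> \<Union>\<B>"
    then obtain B where B: "B\<in>\<B>" "e\<in>B" by blast
    have c2: "card e = 2" using gb BE B by blast
    obtain y where y: "y \<in> e" "y \<noteq> r B" using c2 unfolding card_2_iff by auto
    have ey: "e = {r B, y}" using Lmem[OF c2 r[OF B] y(1)] y by auto
    have "y \<notin> \<Union>(\<Union>\<B> - {e})"
    proof
      assume "y \<in> \<Union>(\<Union>\<B> - {e})"
      then obtain g B' where g: "y \<in> g" "g \<in> B'" "B' \<in> \<B>" "g \<noteq> e" by blast
      show False
      proof (cases "B' = B")
        case True
        then have "g = {r B, y}" using Lmem[of g "r B" y] gb(2) BE g r B y by blast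
        then show ?thesis using ey g by simp
      next
        case False
        then have "y \<in> \<Union>B \<inter> \<Union>B'" using g B y by auto
        then show ?thesis using disj[OF B(1) g(3)] False by auto
      qed
    qed
    then show "\<not> e \<subseteq> \<Union>(\<Union>\<B> - {e})" using y by blast
  qed
  have att: "\<forall>e\<in>\<Union>\<B> - f ` \<B>. \<exists>e'\<in>f ` \<B>. card (e - e') = 1"
  proof
    fix e assume e: "e \<in> \<Union>\<B> - f ` \<B>"
    then obtain B where B: "B\<in>\<B>" "e\<in>B" by blast
    have "e \<noteq> f B" using e B by auto
    moreover have "r B \<in> e \<inter> f B" using r B f(1) by auto
    ultimately have "card (e - f B) = 1" using Ldiff gb(2) BE B f(1) by (metis empty_iff subset_eq)
    then show "\<exists>e'\<in>f ` \<B>. card (e - e') = 1" using B by blast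
  qed
  have "f ` \<B> \<subseteq> \<Union>\<B>" using f(1) by blast
  then have "self_disjoint E (\<Union>\<B>)"
    unfolding self_disjoint_def using SE priv att f(2) by (intro conjI exI[of _ "f ` \<B>"]) auto
  then show ?thesis using card1 card2 by blast
qed


lemma sdj_to_bouquets:
  assumes G: "simple_graph V E" and sdj: "self_disjoint E S"
  shows "\<exists>\<B>. strongly_disjoint E \<B> \<and> S = \<Union>\<B>"
proof -
  note gb = graph_basic[OF G]
  have SE: "S \<subseteq> E" and priv: "\<And>e. e\<in>S \<Longrightarrow> \<not> e \<subseteq> \<Union>(S - {e})"
    using sdj unfolding self_disjoint_def by auto
  have "\<exists>S0 \<subseteq> S. induced_matching E S0 \<and> (\<forall>e\<in>S - S0. \<exists>e'\<in>S0. card (e - e') = 1)"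
    using sdj unfolding self_disjoint_def by blast
  then obtain S0 where S0S: "S0 \<subseteq> S" and im: "induced_matching E S0"
    and att: "\<And>e. e\<in>S - S0 \<Longrightarrow> \<exists>e'\<in>S0. card (e - e') = 1" by blast
  have semi: "\<And>e. e\<in>E \<Longrightarrow> e \<subseteq> \<Union>S0 \<Longrightarrow> e \<in> S0"
    using im unfolding induced_matching_def semi_induced_matching_def by blast
  have pd: "\<And>e f. e\<in>S0 \<Longrightarrow> f\<in>S0 \<Longrightarrow> e\<noteq>f \<Longrightarrow> e\<inter>f={}"
    using im unfolding induced_matching_def by blast
  have c2: "\<And>e. e\<in>S \<Longrightarrow> card e = 2" using SE gb(2) by blast
  define bq where "bq e' = {e\<in>S. e = e' \<or> (e \<notin> S0 \<and> e \<inter> e' \<noteq> {})}" for e'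
  have F2: "e1 = e2" if h: "e\<in>S" "e\<notin>S0" "e1\<in>S0" "e2\<in>S0" "e\<inter>e1\<noteq>{}" "e\<inter>e2\<noteq>{}" for e e1 e2
  proof (rule ccontr)
    assume ne: "e1 \<noteq> e2"
    obtain a where a: "a \<in> e" "a \<in> e1" using h by blast
    obtain b where b: "b \<in> e" "b \<in> e2" using h by blast
    have "a \<noteq> b" using pd[OF h(3) h(4) ne] a b by blast
    then have "e = {a,b}" using Lmem[OF c2[OF h(1)] a(1) b(1)] by simp
    then have "e \<subseteq> \<Union>S0" using a(2) b(2) h(3) h(4) by blast
    moreover have "e \<in> E" using SE h(1) by blast
    ultimately have "e \<in> S0" using semi by blast
    then show False using h by blast
  qed
  define \<B> where "\<B> = bq ` S0"
  have bqin: "\<And>e'. e' \<in> S0 \<Longrightarrow> e' \<in> bq e'" using S0S unfolding bq_def by blast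
  have bouq: "bouquet E (bq e')" if e': "e' \<in> S0" for e'
  proof -
    have ne: "bq e' \<noteq> {}" using bqin[OF e'] by blast
    have sub: "bq e' \<subseteq> E" using SE unfolding bq_def by blast
    have "e' \<in> S" using e' S0S by blast
    then obtain u v where uv: "e' = {u,v}" "u \<noteq> v" using c2 unfolding card_2_iff by blast
    have root: "\<exists>x. \<forall>e\<in>bq e'. x \<in> e"
    proof (rule ccontr)
      assume nr: "\<not> (\<exists>x. \<forall>e\<in>bq e'. x \<in> e)"
      then obtain e1 where e1: "e1 \<in> bq e'" "u \<notin> e1" by blast
      from nr obtain e2 where e2: "e2 \<in> bq e'" "v \<notin> e2" by blast
      have e1a: "e1 \<in> S" "e1 \<notin> S0" "e1 \<inter> e' \<noteq> {}" using e1 uv unfolding bq_def by auto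
      have e2a: "e2 \<in> S" "e2 \<notin> S0" "e2 \<inter> e' \<noteq> {}" using e2 uv unfolding bq_def by auto
      have "v \<in> e1" using e1a(3) e1(2) uv by blast
      moreover have "u \<in> e2" using e2a(3) e2(2) uv by blast
      moreover have "e1 \<noteq> e'" "e2 \<noteq> e'" using e1a e2a e' by auto
      ultimately have "e' \<subseteq> \<Union>(S - {e'})" using uv e1a e2a by blast
      then show False using priv \<open>e' \<in> S\<close> by blast
    qed
    show ?thesis unfolding bouquet_def using ne sub root by blast
  qed
  have vdisj: "\<Union>(bq e1) \<inter> \<Union>(bq e2) = {}" if h: "e1 \<in> S0" "e2 \<in> S0" "e1 \<noteq> e2" for e1 e2
  proof (rule ccontr)
    assume "\<Union>(bq e1) \<inter> \<Union>(bq e2) \<noteq> {}"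
    then obtain w g1 g2 where w: "w \<in> g1" "g1 \<in> bq e1" "w \<in> g2" "g2 \<in> bq e2" by blast
    have g1: "g1 \<in> S" "g1 = e1 \<or> (g1 \<notin> S0 \<and> g1 \<inter> e1 \<noteq> {})" using w unfolding bq_def by auto
    have g2: "g2 \<in> S" "g2 = e2 \<or> (g2 \<notin> S0 \<and> g2 \<inter> e2 \<noteq> {})" using w unfolding bq_def by auto
    show False
    proof (cases "g1 = e1")
      case T1: True
      show False
      proof (cases "g2 = e2")
        case True
        then show False using pd[OF h] T1 w by blast
      next
        case False
        then have "g2 \<notin> S0" "g2 \<inter> e2 \<noteq> {}" using g2 by auto
        moreover have "g2 \<inter> e1 \<noteq> {}" using T1 w by blast
        ultimately show False using F2[OF g2(1) _ h(1) h(2)] h(3) by blast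
      qed
    next
      case F1: False
      then have g1a: "g1 \<notin> S0" "g1 \<inter> e1 \<noteq> {}" using g1 by auto
      show False
      proof (cases "g2 = e2")
        case True
        then have "g1 \<inter> e2 \<noteq> {}" using w by blast
        then show False using F2[OF g1(1) g1a(1) h(1) h(2) g1a(2)] h(3) by blast
      next
        case False
        then have g2a: "g2 \<notin> S0" "g2 \<inter> e2 \<noteq> {}" using g2 by auto
        show False
        proof (cases "w \<in> e1 \<or> w \<in> e2")
          case True
          then show False
          proof
            assume "w \<in> e1"
            then have "g2 \<inter> e1 \<noteq> {}" using w by blast
            then show False using F2[OF g2(1) g2a(1) h(1) h(2) _ g2a(2)] h(3) by blast
          next
            assume "w \<in> e2"
            then have "g1 \<inter> e2 \<noteq> {}" using w by blast
            then show False using F2[OF g1(1) g1a(1) h(1) h(2) g1a(2)] h(3) by blast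
          qed
        next
          case False
          obtain a where a: "a \<in> g1" "a \<in> e1" using g1a by blast
          have aw: "a \<noteq> w" using a False by blast
          have g1eq: "g1 = {w,a}" using Lmem[OF c2[OF g1(1)] w(1) a(1)] aw by blast
          have "g1 \<noteq> g2"
          proof
            assume "g1 = g2"
            then have "g1 \<inter> e2 \<noteq> {}" using g2a by blast
            then show False using F2[OF g1(1) g1a(1) h(1) h(2) g1a(2)] h(3) by blast
          qed
          moreover have "e1 \<noteq> g1" using g1a h by blast
          moreover have "e1 \<in> S" using h S0S by blast
          ultimately have "g1 \<subseteq> \<Union>(S - {g1})" using g1eq a w g2(1) by blast
          then show False using priv g1(1) by blast
        qed
      qed
    qed
  qed
  have bqinj: "e1 = e2" if "e1 \<in> S0" "e2 \<in> S0" "bq e1 = bq e2" for e1 e2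
  proof -
    have "e1 \<in> bq e2" using bqin that by metis
    then show ?thesis using that(1) unfolding bq_def by blast
  qed
  define f where "f B = (SOME e'. e' \<in> S0 \<and> B = bq e')" for B
  have fbq: "f (bq e') = e'" if "e' \<in> S0" for e'
  proof -
    have "\<exists>x. x \<in> S0 \<and> bq e' = bq x" using that by blast
    then have "f (bq e') \<in> S0 \<and> bq e' = bq (f (bq e'))" unfolding f_def by (rule someI_ex)
    then show ?thesis using bqinj that by metis
  qed
  have fim: "f ` \<B> = S0" unfolding \<B>_def image_image using fbq by simp
  have fin: "\<forall>B\<in>\<B>. f B \<in> B" unfolding \<B>_def using fbq bqin by simp
  have sd: "strongly_disjoint E \<B>"
    unfolding strongly_disjoint_def
  proof (intro conjI)
    show "\<forall>B\<in>\<B>. bouquet E B" unfolding \<B>_def using bouq by blast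
    show "\<forall>B\<in>\<B>. \<forall>B'\<in>\<B>. B \<noteq> B' \<longrightarrow> \<Union> B \<inter> \<Union> B' = {}"
      unfolding \<B>_def using vdisj by blast
    show "\<exists>f. (\<forall>B\<in>\<B>. f B \<in> B) \<and> induced_matching E (f ` \<B>)"
      using fin fim im by metis
  qed
  have "S = \<Union>\<B>"
  proof
    show "\<Union>\<B> \<subseteq> S" unfolding \<B>_def bq_def by blast
    show "S \<subseteq> \<Union>\<B>"
    proof
      fix e assume e: "e \<in> S"
      show "e \<in> \<Union>\<B>"
      proof (cases "e \<in> S0")
        case True
        then show ?thesis unfolding \<B>_def using bqin by blast
      next
        case False
        then obtain e' where e': "e' \<in> S0" "card (e - e') = 1" using att e by blast
        then have "e \<inter> e' \<noteq> {}" using Ldiff2 c2 e by blast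
        then have "e \<in> bq e'" unfolding bq_def using e False by blast
        then show ?thesis unfolding \<B>_def using e' by blast
      qed
    qed
  qed
  then show ?thesis using sd by blast
qed


lemma semi_to_sdj:
  assumes G: "simple_graph V E" and ssd: "self_semi_disjoint E S"
  shows "self_disjoint E S"
proof -
  note gb = graph_basic[OF G]
  have SE: "S \<subseteq> E" and priv: "\<And>e. e\<in>S \<Longrightarrow> \<not> e \<subseteq> \<Union>(S - {e})"
    using ssd unfolding self_semi_disjoint_def by auto
  have "\<exists>S0 \<subseteq> S. semi_induced_matching E S0 \<and> (\<forall>e\<in>S - S0. \<exists>e'\<in>S0. card (e - e') = 1)"
    using ssd unfolding self_semi_disjoint_def by blast
  then obtain S0 where S0S: "S0 \<subseteq> S" and sim: "semi_induced_matching E S0"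
    and att: "\<And>e. e\<in>S - S0 \<Longrightarrow> \<exists>e'\<in>S0. card (e - e') = 1" by blast
  have semi: "\<And>e. e\<in>E \<Longrightarrow> e \<subseteq> \<Union>S0 \<Longrightarrow> e \<in> S0"
    using sim unfolding semi_induced_matching_def by blast
  have c2: "\<And>e. e\<in>S \<Longrightarrow> card e = 2" using SE gb(2) by blast
  have finS: "finite S" using SE gb(1) finite_subset by blast
  define M where "M = {T. T \<subseteq> S0 \<and> (\<forall>e\<in>T. \<forall>f\<in>T. e \<noteq> f \<longrightarrow> e \<inter> f = {})}"
  have "M \<subseteq> Pow S0" unfolding M_def by blast
  moreover have "finite S0" using S0S finS finite_subset by blast
  ultimately have finM: "finite M" using finite_subset by blast
  have "{} \<in> M" unfolding M_def by blast
  then obtain T where TM: "T \<in> M" and Tmax: "\<And>T'. T' \<in> M \<Longrightarrow> T \<le> T' \<Longrightarrow> T = T'"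
    using finite_has_maximal[OF finM] by blast
  have TS0: "T \<subseteq> S0" and Tpd: "\<And>e f. e\<in>T \<Longrightarrow> f\<in>T \<Longrightarrow> e \<noteq> f \<Longrightarrow> e \<inter> f = {}"
    using TM unfolding M_def by auto
  have meet: "\<exists>g\<in>T. e \<inter> g \<noteq> {}" if e: "e \<in> S0" "e \<notin> T" for e
  proof (rule ccontr)
    assume nm: "\<not> (\<exists>g\<in>T. e \<inter> g \<noteq> {})"
    have "insert e T \<in> M" unfolding M_def
    proof (intro CollectI conjI ballI impI)
      show "insert e T \<subseteq> S0" using TS0 e by blast
    next
      fix x y assume xy: "x \<in> insert e T" "y \<in> insert e T" "x \<noteq> y"
      show "x \<inter> y = {}"
      proof (cases "x = e")
        case True
        then have "y \<in> T" using xy by blast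
        then show ?thesis using nm True by blast
      next
        case False
        then have x: "x \<in> T" using xy by blast
        show ?thesis
        proof (cases "y = e")
          case True
          then show ?thesis using nm x by blast
        next
          case False
          then have "y \<in> T" using xy by blast
          then show ?thesis using Tpd x xy(3) by blast
        qed
      qed
    qed
    moreover have "T \<le> insert e T" by blast
    ultimately have "T = insert e T" using Tmax by blast
    then show False using e by blast
  qed
  have TS: "T \<subseteq> S" using TS0 S0S by blast
  have Tim: "induced_matching E T"
    unfolding induced_matching_def semi_induced_matching_def
  proof (intro conjI ballI impI)
    show "T \<subseteq> E" using TS SE by blast
  next
    fix e assume e: "e \<in> E" "e \<subseteq> \<Union>T"
    then have "e \<subseteq> \<Union>S0" using TS0 by blast
    then have eS0: "e \<in> S0" using semi e(1) by blast
    show "e \<in> T"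
    proof (rule ccontr)
      assume "e \<notin> T"
      then have "\<Union>T \<subseteq> \<Union>(S - {e})" using TS by blast
      then have "e \<subseteq> \<Union>(S - {e})" using e(2) by blast
      then show False using priv eS0 S0S by blast
    qed
  next
    fix e f assume "e \<in> T" "f \<in> T" "e \<noteq> f"
    then show "e \<inter> f = {}" using Tpd by blast
  qed
  have Tatt: "\<exists>e'\<in>T. card (e - e') = 1" if e: "e \<in> S - T" for e
  proof (cases "e \<in> S0")
    case True
    then obtain g where g: "g \<in> T" "e \<inter> g \<noteq> {}" using meet e by blast
    have "e \<noteq> g" using g e by blast
    then have "card (e - g) = 1" using Ldiff c2 e g TS by blast
    then show ?thesis using g by blast
  next
    case False
    then obtain e' where e': "e' \<in> S0" "card (e - e') = 1" using att e by blast
    have eS: "e \<in> S" using e by blast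
    have ie: "e \<inter> e' \<noteq> {}" using Ldiff2 c2 eS e'(2) by blast
    show ?thesis
    proof (cases "e' \<in> T")
      case True
      then show ?thesis using e' by blast
    next
      case False
      then obtain g where g: "g \<in> T" "e' \<inter> g \<noteq> {}" using meet e' by blast
      then obtain u where u: "u \<in> e'" "u \<in> g" by blast
      have e'S: "e' \<in> S" using e' S0S by blast
      have gne: "g \<noteq> e'" using g False by blast
      have gS: "g \<in> S" using g TS by blast
      obtain b where b: "b \<in> e'" "b \<notin> \<Union>(S - {e'})" using priv[OF e'S] by blast
      have bu: "b \<noteq> u" using b u gne gS by blast
      have e'eq: "e' = {u,b}" using Lmem[OF c2[OF e'S] u(1) b(1)] bu by blast
      have ne: "e \<noteq> e'" using False e'(1) \<open>e \<notin> S0\<close> by blast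
      have "b \<notin> e" using b ne eS by blast
      then have ue: "u \<in> e" using ie e'eq by blast
      have "e \<noteq> g" using g TS0 \<open>e \<notin> S0\<close> by blast
      moreover have "e \<inter> g \<noteq> {}" using ue u by blast
      ultimately have "card (e - g) = 1" using Ldiff c2 eS gS by blast
      then show ?thesis using g by blast
    qed
  qed
  show ?thesis unfolding self_disjoint_def
    using SE priv Tim TS Tatt by (intro conjI ballI exI[of _ T]) auto
qed


lemma sdj_iff_semi:
  assumes G: "simple_graph V E"
  shows "self_semi_disjoint E S \<longleftrightarrow> self_disjoint E S"
proof
  assume "self_semi_disjoint E S" then show "self_disjoint E S" using semi_to_sdj[OF G] by blast
next
  assume h: "self_disjoint E S"
  have a: "S \<subseteq> E" "\<forall>e\<in>S. \<not> e \<subseteq> \<Union>(S - {e})"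
    using h unfolding self_disjoint_def by auto
  have "\<exists>S0 \<subseteq> S. induced_matching E S0 \<and> (\<forall>e\<in>S - S0. \<exists>e'\<in>S0. card (e - e') = 1)"
    using h unfolding self_disjoint_def by blast
  then obtain S0 where S0: "S0 \<subseteq> S" "induced_matching E S0" "\<forall>e\<in>S - S0. \<exists>e'\<in>S0. card (e - e') = 1"
    by blast
  have "semi_induced_matching E S0" using S0(2) unfolding induced_matching_def by blast
  then show "self_semi_disjoint E S" unfolding self_semi_disjoint_def
    using a S0(1) S0(3) by (intro conjI exI[of _ S0]) auto
qed

theorem proposition1p4:
  fixes V :: "'a set" and E :: "'a set set"
  assumes "simple_graph V E"
  shows "(\<forall>\<B> i j. strongly_disjoint E \<B> \<and> bouquets_type \<B> = (i, j) \<longrightarrow>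
             self_disjoint E (bouquet_edges \<B>) \<and> family_type (bouquet_edges \<B>) = (i, i + j))
       \<and> (\<forall>S i j. self_disjoint E S \<and> family_type S = (i, i + j) \<longrightarrow>
             (\<exists>\<B>. strongly_disjoint E \<B> \<and> bouquets_type \<B> = (i, j) \<and> S = bouquet_edges \<B>))
       \<and> (\<forall>S. self_semi_disjoint E S \<longrightarrow> self_disjoint E S)
       \<and> (d1G E = d2G E \<and> d2G E = dG E)
       \<and> (d1G' E = d2G' E \<and> d2G' E = int (dG' E))"
proof -
  note G = assms
  have P1: "\<forall>\<B> i j. strongly_disjoint E \<B> \<and> bouquets_type \<B> = (i, j) \<longrightarrow>
             self_disjoint E (bouquet_edges \<B>) \<and> family_type (bouquet_edges \<B>) = (i, i + j)"
  proof (intro allI impI)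
    fix \<B> i j assume h: "strongly_disjoint E \<B> \<and> bouquets_type \<B> = (i, j)"
    have "self_disjoint E (\<Union>\<B>)" "card (\<Union>\<B>) = (\<Sum>B\<in>\<B>. card B)"
      "card (\<Union>(\<Union>\<B>)) = (\<Sum>B\<in>\<B>. card B) + card \<B>"
      using sd_props[OF G] h by auto
    then show "self_disjoint E (bouquet_edges \<B>) \<and> family_type (bouquet_edges \<B>) = (i, i + j)"
      using h unfolding bouquets_type_def family_type_def bouquet_edges_def by auto
  qed
  have P2: "\<forall>S i j. self_disjoint E S \<and> family_type S = (i, i + j) \<longrightarrow>
             (\<exists>\<B>. strongly_disjoint E \<B> \<and> bouquets_type \<B> = (i, j) \<and> S = bouquet_edges \<B>)"
  proof (intro allI impI)
    fix S i j assume h: "self_disjoint E S \<and> family_type S = (i, i + j)"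
    then obtain \<B> where B: "strongly_disjoint E \<B>" "S = \<Union>\<B>" using sdj_to_bouquets[OF G] by blast
    have "card (\<Union>\<B>) = (\<Sum>B\<in>\<B>. card B)" "card (\<Union>(\<Union>\<B>)) = (\<Sum>B\<in>\<B>. card B) + card \<B>"
      using sd_props[OF G B(1)] by auto
    then have "bouquets_type \<B> = (i, j)" using h B(2) unfolding bouquets_type_def family_type_def by auto
    then show "\<exists>\<B>. strongly_disjoint E \<B> \<and> bouquets_type \<B> = (i, j) \<and> S = bouquet_edges \<B>"
      using B unfolding bouquet_edges_def by blast
  qed
  have P3: "\<forall>S. self_semi_disjoint E S \<longrightarrow> self_disjoint E S" using sdj_iff_semi[OF G] by blast
  have eq12: "\<And>P. {P S | S. self_disjoint E S} = {P S | S. self_semi_disjoint E S}"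
    using sdj_iff_semi[OF G] by blast
  have toB: "\<exists>\<B>. strongly_disjoint E \<B> \<and> card S = fst (bouquets_type \<B>)
                \<and> int (snd (family_type S)) - int (fst (family_type S)) = int (snd (bouquets_type \<B>))"
    if sdS: "self_disjoint E S" for S
  proof -
    obtain \<B> where B: "strongly_disjoint E \<B>" "S = \<Union>\<B>" using sdj_to_bouquets[OF G sdS] by blast
    have "card (\<Union>\<B>) = (\<Sum>B\<in>\<B>. card B)" "card (\<Union>(\<Union>\<B>)) = (\<Sum>B\<in>\<B>. card B) + card \<B>"
      using sd_props[OF G B(1)] by auto
    then show ?thesis using B unfolding bouquets_type_def family_type_def by auto
  qed
  have fromB: "\<exists>S. self_disjoint E S \<and> card S = fst (bouquets_type \<B>)
                \<and> int (snd (family_type S)) - int (fst (family_type S)) = int (snd (bouquets_type \<B>))"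
    if sdB: "strongly_disjoint E \<B>" for \<B>
  proof -
    have "self_disjoint E (\<Union>\<B>)" "card (\<Union>\<B>) = (\<Sum>B\<in>\<B>. card B)" "card (\<Union>(\<Union>\<B>)) = (\<Sum>B\<in>\<B>. card B) + card \<B>"
      using sd_props[OF G sdB] by auto
    then show ?thesis unfolding bouquets_type_def family_type_def by auto
  qed
  have e1: "{card S | S. self_disjoint E S} = {fst (bouquets_type \<B>) | \<B>. strongly_disjoint E \<B>}"
  proof
    show "{card S | S. self_disjoint E S} \<subseteq> {fst (bouquets_type \<B>) | \<B>. strongly_disjoint E \<B>}"
    proof
      fix x assume "x \<in> {card S | S. self_disjoint E S}"
      then obtain S where S: "self_disjoint E S" "x = card S" by blast
      obtain \<B> where "strongly_disjoint E \<B>" "card S = fst (bouquets_type \<B>)" using toB[OF S(1)] by blast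
      then show "x \<in> {fst (bouquets_type \<B>) | \<B>. strongly_disjoint E \<B>}" using S(2) by force
    qed
    show "{fst (bouquets_type \<B>) | \<B>. strongly_disjoint E \<B>} \<subseteq> {card S | S. self_disjoint E S}"
    proof
      fix x assume "x \<in> {fst (bouquets_type \<B>) | \<B>. strongly_disjoint E \<B>}"
      then obtain \<B> where B: "strongly_disjoint E \<B>" "x = fst (bouquets_type \<B>)" by blast
      obtain S where "self_disjoint E S" "card S = fst (bouquets_type \<B>)" using fromB[OF B(1)] by blast
      then show "x \<in> {card S | S. self_disjoint E S}" using B(2) by force
    qed
  qed
  have e2: "{int (snd (family_type S)) - int (fst (family_type S)) | S. self_disjoint E S}
      = int ` {snd (bouquets_type \<B>) | \<B>. strongly_disjoint E \<B>}"
  proof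
    show "{int (snd (family_type S)) - int (fst (family_type S)) | S. self_disjoint E S}
      \<subseteq> int ` {snd (bouquets_type \<B>) | \<B>. strongly_disjoint E \<B>}"
    proof
      fix x assume "x \<in> {int (snd (family_type S)) - int (fst (family_type S)) | S. self_disjoint E S}"
      then obtain S where S: "self_disjoint E S" "x = int (snd (family_type S)) - int (fst (family_type S))" by blast
      obtain \<B> where "strongly_disjoint E \<B>"
        "int (snd (family_type S)) - int (fst (family_type S)) = int (snd (bouquets_type \<B>))"
        using toB[OF S(1)] by blast
      then show "x \<in> int ` {snd (bouquets_type \<B>) | \<B>. strongly_disjoint E \<B>}" using S(2) by force
    qed
    show "int ` {snd (bouquets_type \<B>) | \<B>. strongly_disjoint E \<B>} \<subseteq>
      {int (snd (family_type S)) - int (fst (family_type S)) | S. self_disjoint E S}"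
    proof
      fix x assume "x \<in> int ` {snd (bouquets_type \<B>) | \<B>. strongly_disjoint E \<B>}"
      then obtain \<B> where B: "strongly_disjoint E \<B>" "x = int (snd (bouquets_type \<B>))" by blast
      obtain S where "self_disjoint E S"
        "int (snd (family_type S)) - int (fst (family_type S)) = int (snd (bouquets_type \<B>))"
        using fromB[OF B(1)] by blast
      then show "x \<in> {int (snd (family_type S)) - int (fst (family_type S)) | S. self_disjoint E S}"
        using B(2) by force
    qed
  qed
  have fin: "finite {snd (bouquets_type \<B>) | \<B>. strongly_disjoint E \<B>}"
  proof -
    have "{snd (bouquets_type \<B>) | \<B>. strongly_disjoint E \<B>} \<subseteq> (\<lambda>\<B>. snd (bouquets_type \<B>)) ` Pow (Pow E)"
    proof
      fix x assume "x \<in> {snd (bouquets_type \<B>) | \<B>. strongly_disjoint E \<B>}"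
      then obtain \<B> where B: "strongly_disjoint E \<B>" "x = snd (bouquets_type \<B>)" by blast
      have "\<forall>B\<in>\<B>. bouquet E B" using B(1) unfolding strongly_disjoint_def by blast
      then have "\<B> \<in> Pow (Pow E)" unfolding bouquet_def by blast
      then show "x \<in> (\<lambda>\<B>. snd (bouquets_type \<B>)) ` Pow (Pow E)" using B(2) by blast
    qed
    moreover have "finite (Pow (Pow E))" using graph_basic(1)[OF G] by simp
    ultimately show ?thesis using finite_subset by blast
  qed
  have ne: "{snd (bouquets_type \<B>) | \<B>. strongly_disjoint E \<B>} \<noteq> {}"
  proof -
    have "strongly_disjoint E {}" unfolding strongly_disjoint_def induced_matching_def semi_induced_matching_def
      using graph_basic(2)[OF G] by fastforce
    then show ?thesis by blast
  qed
  have mono_int: "Max (int ` A) = int (Max A)" if "finite A" "A \<noteq> {}" for A :: "nat set"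
    using that by (simp add: mono_Max_commute[symmetric] mono_def)
  have D1: "d1G E = d2G E \<and> d2G E = dG E"
    unfolding d1G_def d2G_def dG_def using eq12[of card] e1 by simp
  have D2: "d1G' E = d2G' E \<and> d2G' E = int (dG' E)"
    unfolding d1G'_def d2G'_def dG'_def
    using eq12[of "\<lambda>S. int (snd (family_type S)) - int (fst (family_type S))"] e2 mono_int[OF fin ne]
    by simp
  show ?thesis using P1 P2 P3 D1 D2 by blast
qed

end
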